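(* Let $\mathcal{X}$ be a measurable space, $\mathcal{G}$ a class of measurable classifiers $g:\mathcal{X}\to\{-1,+1\}$, and $p\in(0,1)$ a given number. Let $(X'_1,Y'_1),\ldots,(X'_n,Y'_n)$ be i.i.d. copies of a pair $(X',Y')\in\mathcal{X}\times\{-1,+1\}$ with $q=\mathbb{P}\{Y'=+1\}$. Let $\varepsilon\in(0,1/2)$ and suppose $q\in(\varepsilon,1-\varepsilon)$. Let $n'_+=\sum_{i=1}^n\mathbb{I}\{Y'_i=+1\}$, $n'_-=n-n'_+$, and define for $g\in\mathcal{G}$ $$\widetilde{\mathcal{R}}_{w^*,n}(g)=\frac{2p}{q}\frac{1}{n}\sum_{i:Y'_i=+1}\mathbb{I}\{g(X'_i)=-1\}+\frac{1}{1-q}\frac{1}{n}\sum_{i:Y'_i=-1}\mathbb{I}\{g(X'_i)=+1\},$$ $$\widetilde{\mathcal{R}}_{\widehat{w}^*,n}(g)=\frac{2p}{n'_+}\sum_{i:Y'_i=+1}\mathbb{I}\{g(X'_i)=-1\}+\frac{1}{n'_-}\sum_{i:Y'_i=-1}\mathbb{I}\{g(X'_i)=+1\}.$$ Then for any $\delta\in(0,1)$, as soon as $n\ge 2\log(2/\delta)/\varepsilon^2$, with probability larger than $1-\delta$, $$\sup_{g\in\mathcal{G}}\left|\widetilde{\mathcal{R}}_{\widehat{w}^*,n}(g)-\widetilde{\mathcal{R}}_{w^*,n}(g)\right|\le\frac{2(2p+1)}{\varepsilon^2}\sqrt{\frac{\log(2/\delta)}{2n}}.$$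
   Context: $\mathbb{I}\{\cdot\}$ denotes the indicator function. In the paper's application, $Y'=+1$ marks positive examples and $Y'=-1$ marks unlabeled examples. *)

theory Defs
  imports "HOL-Probability.Probability"
begin

text \<open>Sample: x i, y i for i in {1..n}; labels y i in {-1,+1} (as int).\<close>

definition n_pos :: "nat \<Rightarrow> (nat \<Rightarrow> int) \<Rightarrow> nat" where
  "n_pos n y = card {i \<in> {1..n}. y i = 1}"

definition n_neg :: "nat \<Rightarrow> (nat \<Rightarrow> int) \<Rightarrow> nat" where
  "n_neg n y = n - n_pos n y"

definition R_wstar :: "real \<Rightarrow> real \<Rightarrow> nat \<Rightarrow> (nat \<Rightarrow> 'x) \<Rightarrow> (nat \<Rightarrow> int) \<Rightarrow> ('x \<Rightarrow> int) \<Rightarrow> real" where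
  "R_wstar p q n x y g =
     2 * p / q * (1 / real n) * (\<Sum>i\<in>{i \<in> {1..n}. y i = 1}. of_bool (g (x i) = -1))
     + 1 / (1 - q) * (1 / real n) * (\<Sum>i\<in>{i \<in> {1..n}. y i = -1}. of_bool (g (x i) = 1))"

definition R_what :: "real \<Rightarrow> nat \<Rightarrow> (nat \<Rightarrow> 'x) \<Rightarrow> (nat \<Rightarrow> int) \<Rightarrow> ('x \<Rightarrow> int) \<Rightarrow> real" where
  "R_what p n x y g =
     2 * p / real (n_pos n y) * (\<Sum>i\<in>{i \<in> {1..n}. y i = 1}. of_bool (g (x i) = -1))
     + 1 / real (n_neg n y) * (\<Sum>i\<in>{i \<in> {1..n}. y i = -1}. of_bool (g (x i) = 1))"

end

theory Submission imports Defs begin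

lemma aux_term:
  fixes s k c m :: real
  assumes "0 \<le> s" "s \<le> k" "0 < c" "0 < m"
  shows "\<bar>s / k - s / (c * m)\<bar> \<le> \<bar>k / m - c\<bar> / c"
proof (cases "k = 0")
  case True then show ?thesis using assms by simp
next
  case False
  then have k: "k > 0" using assms by simp
  have "s / k - s / (c * m) = (s / k) * ((c - k / m) / c)"
    using k assms by (simp add: field_simps)
  then have "\<bar>s / k - s / (c * m)\<bar> = (s / k) * (\<bar>k / m - c\<bar> / c)"
    using k assms by (simp add: abs_mult abs_minus_commute)
  also have "\<dots> \<le> 1 * (\<bar>k / m - c\<bar> / c)"
    using k assms by (intro mult_right_mono) auto
  finally show ?thesis by simp
qed

lemma det_bound:
  fixes y :: "nat \<Rightarrow> int" and x :: "nat \<Rightarrow> 'x" and g :: "'x \<Rightarrow> int"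
  assumes y: "\<forall>i\<in>{1..n}. y i \<in> {-1, 1}" and n: "n > 0" and q: "0 < q" "q < 1" and p: "0 < p"
  shows "\<bar>R_what p n x y g - R_wstar p q n x y g\<bar>
         \<le> (2 * p / q + 1 / (1 - q)) * \<bar>real (n_pos n y) / real n - q\<bar>"
proof -
  define P where "P = {i \<in> {1..n}. y i = 1}"
  define N where "N = {i \<in> {1..n}. y i = -1}"
  define sp where "sp = (\<Sum>i\<in>P. of_bool (g (x i) = -1) :: real)"
  define sn where "sn = (\<Sum>i\<in>N. of_bool (g (x i) = 1) :: real)"
  have NP: "N = {1..n} - P" using y by (auto simp: N_def P_def)
  have cP: "card P = n_pos n y" by (simp add: P_def n_pos_def)
  have cN: "card N = n_neg n y" unfolding NP n_neg_def cP[symmetric]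
    by (subst card_Diff_subset) (auto simp: P_def)
  have sp0: "0 \<le> sp" unfolding sp_def by (intro sum_nonneg) auto
  have sp1: "sp \<le> real (card P)" unfolding sp_def
    using sum_mono[of P "\<lambda>i. of_bool (g (x i) = -1) :: real" "\<lambda>_. 1"] by simp
  have sn0: "0 \<le> sn" unfolding sn_def by (intro sum_nonneg) auto
  have sn1: "sn \<le> real (card N)" unfolding sn_def
    using sum_mono[of N "\<lambda>i. of_bool (g (x i) = 1) :: real" "\<lambda>_. 1"] by simp
  have le: "n_pos n y \<le> n" unfolding cP[symmetric] P_def
    using card_mono[of "{1..n}" "{i \<in> {1..n}. y i = 1}"] by (simp add: subset_iff)
  have eqd: "R_what p n x y g - R_wstar p q n x y g
      = 2 * p * (sp / real (card P) - sp / (q * real n))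
        + (sn / real (card N) - sn / ((1 - q) * real n))"
    unfolding R_what_def R_wstar_def P_def[symmetric] N_def[symmetric] sp_def[symmetric]
      sn_def[symmetric] cP cN by (simp add: field_simps)
  have t1: "\<bar>sp / real (card P) - sp / (q * real n)\<bar> \<le> \<bar>real (card P) / real n - q\<bar> / q"
    using aux_term[OF sp0 sp1 q(1)] n by simp
  have t2: "\<bar>sn / real (card N) - sn / ((1 - q) * real n)\<bar> \<le> \<bar>real (card N) / real n - (1 - q)\<bar> / (1 - q)"
    using aux_term[OF sn0 sn1, of "1 - q" "real n"] n q by simp
  have e2: "\<bar>real (card N) / real n - (1 - q)\<bar> = \<bar>real (n_pos n y) / real n - q\<bar>"
    using n le unfolding cN n_neg_def by (simp add: of_nat_diff field_simps abs_minus_commute)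
  have "\<bar>R_what p n x y g - R_wstar p q n x y g\<bar>
     \<le> 2 * p * \<bar>sp / real (card P) - sp / (q * real n)\<bar> + \<bar>sn / real (card N) - sn / ((1 - q) * real n)\<bar>"
    unfolding eqd using p by (simp add: abs_mult order_trans[OF abs_triangle_ineq])
  also have "\<dots> \<le> 2 * p * (\<bar>real (card P) / real n - q\<bar> / q) + \<bar>real (n_pos n y) / real n - q\<bar> / (1 - q)"
    using t1 t2 e2 p by (intro add_mono mult_left_mono) auto
  also have "\<dots> = (2 * p / q + 1 / (1 - q)) * \<bar>real (n_pos n y) / real n - q\<bar>"
    using q by (simp add: cP field_simps)
  finally show ?thesis .
qed
theorem lemma4:
  fixes M :: "'a measure" and Mx :: "'x measure"
    and G :: "('x \<Rightarrow> int) set"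
    and X :: "nat \<Rightarrow> 'a \<Rightarrow> 'x" and Y :: "nat \<Rightarrow> 'a \<Rightarrow> int"
    and X0 :: "'a \<Rightarrow> 'x" and Y0 :: "'a \<Rightarrow> int"
    and p q \<epsilon> \<delta> :: real and n :: nat
  assumes "prob_space M"
    and "G \<subseteq> measurable Mx (count_space UNIV)"
    and "\<forall>g\<in>G. \<forall>x\<in>space Mx. g x \<in> {-1, 1}"
    and "0 < p" "p < 1"
    and "X0 \<in> measurable M Mx" "Y0 \<in> measurable M (count_space UNIV)"
    and "\<forall>\<omega>\<in>space M. Y0 \<omega> \<in> {-1, 1}"
    and "\<forall>i\<in>{1..n}. X i \<in> measurable M Mx \<and> Y i \<in> measurable M (count_space UNIV)"
    and "\<forall>i\<in>{1..n}. \<forall>\<omega>\<in>space M. Y i \<omega> \<in> {-1, 1}"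
    and "prob_space.indep_vars M (\<lambda>_. Mx \<Otimes>\<^sub>M count_space UNIV)
           (\<lambda>i \<omega>. (X i \<omega>, Y i \<omega>)) {1..n}"
    and "\<forall>i\<in>{1..n}. distr M (Mx \<Otimes>\<^sub>M count_space UNIV) (\<lambda>\<omega>. (X i \<omega>, Y i \<omega>))
                   = distr M (Mx \<Otimes>\<^sub>M count_space UNIV) (\<lambda>\<omega>. (X0 \<omega>, Y0 \<omega>))"
    and "q = measure M {\<omega> \<in> space M. Y0 \<omega> = 1}"
    and "0 < \<epsilon>" "\<epsilon> < 1/2"
    and "\<epsilon> < q" "q < 1 - \<epsilon>"
    and "0 < \<delta>" "\<delta> < 1"
    and "real n \<ge> 2 * ln (2 / \<delta>) / \<epsilon>^2"
  shows "\<exists>A\<in>sets M. measure M A \<ge> 1 - \<delta> \<and>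
           (\<forall>\<omega>\<in>A. \<forall>g\<in>G.
              \<bar>R_what p n (\<lambda>i. X i \<omega>) (\<lambda>i. Y i \<omega>) g
                 - R_wstar p q n (\<lambda>i. X i \<omega>) (\<lambda>i. Y i \<omega>) g\<bar>
              \<le> 2 * (2 * p + 1) / \<epsilon>^2 * sqrt (ln (2 / \<delta>) / (2 * real n)))"
proof -
  interpret prob_space M by fact
  note a = assms
  define Z where "Z = (\<lambda>i \<omega>. (of_bool (Y i \<omega> = 1) :: real))"
  define Z0 where "Z0 = (\<lambda>\<omega>. (of_bool (Y0 \<omega> = 1) :: real))"
  define h where "h = (\<lambda>(u::'x, v::int). (of_bool (v = 1) :: real))"
  have hm: "h \<in> measurable (Mx \<Otimes>\<^sub>M count_space UNIV) borel"
    unfolding h_def by measurable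
  have Zh: "Z i = (\<lambda>\<omega>. h (X i \<omega>, Y i \<omega>))" for i
    by (simp add: Z_def h_def)
  have Z0h: "Z0 = (\<lambda>\<omega>. h (X0 \<omega>, Y0 \<omega>))"
    by (simp add: Z0_def h_def)
  have pm: "(\<lambda>\<omega>. (X i \<omega>, Y i \<omega>)) \<in> measurable M (Mx \<Otimes>\<^sub>M count_space UNIV)" if "i \<in> {1..n}" for i
    using a(9) that by (intro measurable_Pair) auto
  have pm0: "(\<lambda>\<omega>. (X0 \<omega>, Y0 \<omega>)) \<in> measurable M (Mx \<Otimes>\<^sub>M count_space UNIV)"
    using a(6,7) by (intro measurable_Pair) auto
  have Z0m: "random_variable borel Z0"
    unfolding Z0h using measurable_comp[OF pm0 hm] by (simp add: comp_def)
  have indep: "indep_vars (\<lambda>_. borel) Z {1..n}"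
    unfolding Zh using indep_vars_compose2[OF a(11), of "\<lambda>_. h" "\<lambda>_. borel"] hm by simp
  have distrZ: "distr M borel (Z i) = distr M borel Z0" if i: "i \<in> {1..n}" for i
  proof -
    have "distr M borel (Z i) = distr (distr M (Mx \<Otimes>\<^sub>M count_space UNIV) (\<lambda>\<omega>. (X i \<omega>, Y i \<omega>))) borel h"
      unfolding Zh using distr_distr[OF hm pm[OF i]] by (simp add: comp_def)
    also have "\<dots> = distr (distr M (Mx \<Otimes>\<^sub>M count_space UNIV) (\<lambda>\<omega>. (X0 \<omega>, Y0 \<omega>))) borel h"
      using a(12) i by simp
    also have "\<dots> = distr M borel Z0"
      unfolding Z0h using distr_distr[OF hm pm0] by (simp add: comp_def)
    finally show ?thesis .
  qed
  interpret H: Hoeffding_ineq_iid M "{1..n}" Z Z0 0 1 "expectation Z0"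
  proof unfold_locales
    show "finite {1..n}" by simp
    show "indep_vars (\<lambda>_. borel) Z {1..n}" by (rule indep)
    show "\<And>i. i \<in> {1..n} \<Longrightarrow> distr M borel (Z i) = distr M borel Z0" by (rule distrZ)
    show "random_variable borel Z0" by (rule Z0m)
    show "AE x in M. Z0 x \<in> {0..1}" by (intro AE_I2) (simp add: Z0_def)
  qed (rule reflexive)
  have EZ0: "expectation Z0 = q"
  proof -
    have "expectation Z0 = expectation (indicator {\<omega> \<in> space M. Y0 \<omega> = 1})"
      by (intro Bochner_Integration.integral_cong) (auto simp: Z0_def indicator_def)
    also have "\<dots> = q"
    proof -
      have ev: "{\<omega> \<in> space M. Y0 \<omega> = 1} \<in> events"
      proof -
        have "{\<omega> \<in> space M. Y0 \<omega> = 1} = Y0 -` {1} \<inter> space M" by auto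
        then show ?thesis using measurable_sets[OF a(7), of "{1}"] by simp
      qed
      show ?thesis using a(13) Bochner_Integration.integral_indicator[of M "{\<omega> \<in> space M. Y0 \<omega> = 1}"] by (simp add: Int_absorb2)
    qed
    finally show ?thesis .
  qed
  have lnpos: "ln (2 / \<delta>) > 0" using a(18,19) by simp
  have "real n > 0"
  proof -
    have "2 * ln (2 / \<delta>) / \<epsilon>^2 > 0" using lnpos a(14) by simp
    then show ?thesis using a(20) by linarith
  qed
  then have npos: "n > 0" by simp
  define t where "t = sqrt (ln (2 / \<delta>) / (2 * real n))"
  have t0: "t \<ge> 0" unfolding t_def using lnpos by simp
  define B where "B = {\<omega> \<in> space M. \<bar>(\<Sum>i\<in>{1..n}. Z i \<omega>) / real (card {1..n}) - expectation Z0\<bar> \<ge> t}"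
  have PB: "prob B \<le> 2 * exp (- 2 * real (card {1..n}) * t\<^sup>2 / (1 - 0)\<^sup>2)"
    unfolding B_def using npos by (intro H.Hoeffding_ineq_abs_ge'[OF t0]) auto
  have "2 * real (card {1..n}) * t\<^sup>2 = ln (2 / \<delta>)"
    unfolding t_def using lnpos npos by simp
  then have PB2: "prob B \<le> \<delta>"
  proof -
    have "exp (- ln (2 / \<delta>)) = \<delta> / 2" using a(18) by (simp add: exp_minus)
    then show ?thesis using PB \<open>2 * real (card {1..n}) * t\<^sup>2 = ln (2 / \<delta>)\<close> by simp
  qed
  have Zm: "random_variable borel (Z i)" if "i \<in> {1..n}" for i
    using H.random_variable that by simp
  have Bev: "B \<in> events"
    unfolding B_def using Zm by measurable
  define A where "A = space M - B"
  have Aev: "A \<in> events" unfolding A_def using Bev by auto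
  have PA: "prob A \<ge> 1 - \<delta>" unfolding A_def using prob_compl[OF Bev] PB2 by simp
  show ?thesis
  proof (intro bexI[OF _ Aev] conjI PA ballI)
    fix \<omega> g assume w: "\<omega> \<in> A" and g: "g \<in> G"
    have ws: "\<omega> \<in> space M" and wt: "\<bar>(\<Sum>i\<in>{1..n}. Z i \<omega>) / real n - q\<bar> < t"
      using w by (auto simp: A_def B_def EZ0)
    have S: "(\<Sum>i\<in>{1..n}. Z i \<omega>) = real (n_pos n (\<lambda>i. Y i \<omega>))"
      unfolding Z_def n_pos_def by (simp add: sum_of_bool_eq Int_def)
    have q: "0 < q" "q < 1" using a(14-18) by auto
    have "\<bar>R_what p n (\<lambda>i. X i \<omega>) (\<lambda>i. Y i \<omega>) g - R_wstar p q n (\<lambda>i. X i \<omega>) (\<lambda>i. Y i \<omega>) g\<bar>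
        \<le> (2 * p / q + 1 / (1 - q)) * \<bar>real (n_pos n (\<lambda>i. Y i \<omega>)) / real n - q\<bar>"
      using a(10) ws npos q a(4) by (intro det_bound) auto
    also have "\<dots> \<le> (2 * p / \<epsilon> + 1 / \<epsilon>) * t"
    proof (intro mult_mono add_mono)
      show "2 * p / q \<le> 2 * p / \<epsilon>" using a(4,14,16) by (intro divide_left_mono) auto
      show "1 / (1 - q) \<le> 1 / \<epsilon>" using a(14,17) by (intro divide_left_mono) auto
      show "\<bar>real (n_pos n (\<lambda>i. Y i \<omega>)) / real n - q\<bar> \<le> t" using wt S by simp
      show "0 \<le> 2 * p / \<epsilon> + 1 / \<epsilon>" using a(4,14) by simp
    qed simp
    also have "\<dots> \<le> 2 * (2 * p + 1) / \<epsilon>^2 * t"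
    proof (intro mult_right_mono t0)
      have "2 * p / \<epsilon> + 1 / \<epsilon> = (2 * p + 1) * \<epsilon> / \<epsilon>^2"
        using a(14) by (simp add: field_simps power2_eq_square)
      also have "\<dots> \<le> (2 * p + 1) * 2 / \<epsilon>^2"
        using a(4,14,15) by (intro divide_right_mono mult_left_mono) auto
      finally show "2 * p / \<epsilon> + 1 / \<epsilon> \<le> 2 * (2 * p + 1) / \<epsilon>^2" by simp
    qed
    finally show "\<bar>R_what p n (\<lambda>i. X i \<omega>) (\<lambda>i. Y i \<omega>) g - R_wstar p q n (\<lambda>i. X i \<omega>) (\<lambda>i. Y i \<omega>) g\<bar>
        \<le> 2 * (2 * p + 1) / \<epsilon>^2 * sqrt (ln (2 / \<delta>) / (2 * real n))"
      unfolding t_def .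
  qed
qed

end
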